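(* Let $w$ be a word of length $n\ge 2$ such that each letter appears at most $k$ times in $w$. Then $f(w)\le \max\{4k,n\}+2$.
   Context: A word of length $n$ is a sequence $w=w_1w_2\cdots w_n$ of letters (symbols). Let $[n]=\{1,\dots,n\}$. An $n$-grid is a function $G:[n]^2\to\Sigma$, where $\Sigma$ is an arbitrary set of letters. The $i$th row of $G$ contains $w$ if $G(i,j)=w_j$ for all $1\le j\le n$, or $G(i,j)=w_{n-j+1}$ for all $1\le j\le n$. The $j$th column contains $w$ if $G(i,j)=w_i$ for all $i$, or $G(i,j)=w_{n-i+1}$ for all $i$. The main diagonal contains $w$ if $G(i,i)=w_i$ for all $i$ or $G(i,i)=w_{n-i+1}$ for all $i$; the anti-diagonal contains $w$ if $G(i,n-i+1)=w_i$ for all $i$ or $G(i,n-i+1)=w_{n-i+1}$ for all $i$. Let $f(w,G)$ be the number of the $2n+2$ lines ($n$ rows, $n$ columns, $2$ diagonals) of $G$ that contain $w$, and $f(w)=\max_G f(w,G)$ over all $n$-grids $G$. *)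

theory Defs
  imports Main
begin

text \<open>A word of length n is represented by w :: nat => 'a, with letters w 1, ..., w n.
An n-grid is G :: nat => nat => 'a, only the values on {1..n} x {1..n} matter.\<close>

definition seq_contains :: "nat \<Rightarrow> (nat \<Rightarrow> 'a) \<Rightarrow> (nat \<Rightarrow> 'a) \<Rightarrow> bool" where
  "seq_contains n L w \<longleftrightarrow>
     (\<forall>i\<in>{1..n}. L i = w i) \<or> (\<forall>i\<in>{1..n}. L i = w (n - i + 1))"

definition row_contains :: "nat \<Rightarrow> (nat \<Rightarrow> nat \<Rightarrow> 'a) \<Rightarrow> nat \<Rightarrow> (nat \<Rightarrow> 'a) \<Rightarrow> bool" where
  "row_contains n G i w \<longleftrightarrow> seq_contains n (\<lambda>j. G i j) w"

definition col_contains :: "nat \<Rightarrow> (nat \<Rightarrow> nat \<Rightarrow> 'a) \<Rightarrow> nat \<Rightarrow> (nat \<Rightarrow> 'a) \<Rightarrow> bool" where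
  "col_contains n G j w \<longleftrightarrow> seq_contains n (\<lambda>i. G i j) w"

definition diag_contains :: "nat \<Rightarrow> (nat \<Rightarrow> nat \<Rightarrow> 'a) \<Rightarrow> (nat \<Rightarrow> 'a) \<Rightarrow> bool" where
  "diag_contains n G w \<longleftrightarrow> seq_contains n (\<lambda>i. G i i) w"

definition antidiag_contains :: "nat \<Rightarrow> (nat \<Rightarrow> nat \<Rightarrow> 'a) \<Rightarrow> (nat \<Rightarrow> 'a) \<Rightarrow> bool" where
  "antidiag_contains n G w \<longleftrightarrow> seq_contains n (\<lambda>i. G i (n - i + 1)) w"

definition f_grid :: "nat \<Rightarrow> (nat \<Rightarrow> 'a) \<Rightarrow> (nat \<Rightarrow> nat \<Rightarrow> 'a) \<Rightarrow> nat" where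
  "f_grid n w G =
     card {i\<in>{1..n}. row_contains n G i w}
   + card {j\<in>{1..n}. col_contains n G j w}
   + (if diag_contains n G w then 1 else 0)
   + (if antidiag_contains n G w then 1 else 0)"

text \<open>f(w) = max over all n-grids (values bounded by 2n+2, so the max exists).\<close>
definition f_max :: "nat \<Rightarrow> (nat \<Rightarrow> 'a) \<Rightarrow> nat" where
  "f_max n w = Max (range (f_grid n w))"

end

theory Submission
  imports Defs
begin

lemma seq_count:
  assumes "seq_contains n L w"
    and "\<And>a. card {i\<in>{1..n}. w i = a} \<le> k"
  shows "card {j\<in>{1..n}. L j = a} \<le> k"
proof -
  from assms(1) consider "\<forall>i\<in>{1..n}. L i = w i" | "\<forall>i\<in>{1..n}. L i = w (n - i + 1)"
    unfolding seq_contains_def by blast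
  then show ?thesis
  proof cases
    case 1
    then have "{j\<in>{1..n}. L j = a} = {i\<in>{1..n}. w i = a}" by auto
    then show ?thesis using assms(2) by simp
  next
    case 2
    have "{j\<in>{1..n}. L j = a} \<subseteq> (\<lambda>i. n - i + 1) ` {i\<in>{1..n}. w i = a}"
    proof
      fix j assume j: "j \<in> {j\<in>{1..n}. L j = a}"
      then have "n - j + 1 \<in> {i\<in>{1..n}. w i = a}" using 2 by auto
      moreover have "j = n - (n - j + 1) + 1" using j by auto
      ultimately show "j \<in> (\<lambda>i. n - i + 1) ` {i\<in>{1..n}. w i = a}" by blast
    qed
    then have "card {j\<in>{1..n}. L j = a} \<le> card ((\<lambda>i. n - i + 1) ` {i\<in>{1..n}. w i = a})"
      by (intro card_mono) auto
    also have "\<dots> \<le> card {i\<in>{1..n}. w i = a}" by (rule card_image_le) auto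
    finally show ?thesis using assms(2)[of a] by linarith
  qed
qed

lemma card_two:
  fixes n :: nat
  assumes "S \<subseteq> {j\<in>{1..n}. L j = a} \<union> {j\<in>{1..n}. L j = b}"
    and "card {j\<in>{1..n}. L j = a} \<le> k" and "card {j\<in>{1..n}. L j = b} \<le> k"
  shows "card S \<le> 2 * k"
proof -
  have "card S \<le> card ({j\<in>{1..n}. L j = a} \<union> {j\<in>{1..n}. L j = b})"
  proof (rule card_mono)
    show "finite ({j\<in>{1..n}. L j = a} \<union> {j\<in>{1..n}. L j = b})" by (intro finite_UnI; rule finite_subset[of _ "{1..n}"]) auto
  qed (rule assms(1))
  also have "\<dots> \<le> card {j\<in>{1..n}. L j = a} + card {j\<in>{1..n}. L j = b}"
    by (rule card_Un_le)
  finally show ?thesis using assms(2,3) by linarith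
qed

lemma seq_at:
  assumes "seq_contains n L w" "i \<in> {1..n}"
  shows "L i = w i \<or> L i = w (n - i + 1)"
  using assms unfolding seq_contains_def by blast

lemma grid_bound:
  fixes w :: "nat \<Rightarrow> 'a" and n k :: nat
  assumes "\<And>a. card {i\<in>{1..n}. w i = a} \<le> k"
  shows "f_grid n w G \<le> max (4 * k) n + 2"
proof -
  define R where "R = {i\<in>{1..n}. row_contains n G i w}"
  define C where "C = {j\<in>{1..n}. col_contains n G j w}"
  have cR: "card R \<le> n" unfolding R_def
  proof -
    have "card {i\<in>{1..n}. row_contains n G i w} \<le> card {1..n}" by (rule card_mono) auto
    then show "card {i\<in>{1..n}. row_contains n G i w} \<le> n" by simp
  qed
  have cC: "card C \<le> n" unfolding C_def
  proof -
    have "card {i\<in>{1..n}. col_contains n G i w} \<le> card {1..n}" by (rule card_mono) auto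
    then show "card {i\<in>{1..n}. col_contains n G i w} \<le> n" by simp
  qed
  have C2: "card C \<le> 2 * k" if "i0 \<in> R" for i0
  proof -
    have i0: "i0 \<in> {1..n}" "seq_contains n (\<lambda>j. G i0 j) w"
      using that unfolding R_def row_contains_def by auto
    have "C \<subseteq> {j\<in>{1..n}. G i0 j = w i0} \<union> {j\<in>{1..n}. G i0 j = w (n - i0 + 1)}"
    proof
      fix j assume "j \<in> C"
      then have "j \<in> {1..n}" "seq_contains n (\<lambda>i. G i j) w"
        unfolding C_def col_contains_def by auto
      then show "j \<in> {j\<in>{1..n}. G i0 j = w i0} \<union> {j\<in>{1..n}. G i0 j = w (n - i0 + 1)}"
        using seq_at[of n "\<lambda>i. G i j" w i0] i0 by auto
    qed
    then show ?thesis
      by (rule card_two) (use seq_count[OF i0(2) assms] in auto)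
  qed
  have R2: "card R \<le> 2 * k" if "j0 \<in> C" for j0
  proof -
    have j0: "j0 \<in> {1..n}" "seq_contains n (\<lambda>i. G i j0) w"
      using that unfolding C_def col_contains_def by auto
    have "R \<subseteq> {i\<in>{1..n}. G i j0 = w j0} \<union> {i\<in>{1..n}. G i j0 = w (n - j0 + 1)}"
    proof
      fix i assume "i \<in> R"
      then have "i \<in> {1..n}" "seq_contains n (\<lambda>j. G i j) w"
        unfolding R_def row_contains_def by auto
      then show "i \<in> {i\<in>{1..n}. G i j0 = w j0} \<union> {i\<in>{1..n}. G i j0 = w (n - j0 + 1)}"
        using seq_at[of n "\<lambda>j. G i j" w j0] j0 by auto
    qed
    then show ?thesis
      by (rule card_two) (use seq_count[OF j0(2) assms] in auto)
  qed
  have "card R + card C \<le> max (4 * k) n"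
  proof (cases "R = {}")
    case True then show ?thesis using cC by simp
  next
    case False
    then obtain i0 where "i0 \<in> R" by blast
    show ?thesis
    proof (cases "C = {}")
      case True then show ?thesis using cR by simp
    next
      case False
      then obtain j0 where "j0 \<in> C" by blast
      show ?thesis using C2[OF \<open>i0 \<in> R\<close>] R2[OF \<open>j0 \<in> C\<close>] by linarith
    qed
  qed
  then show ?thesis unfolding f_grid_def R_def[symmetric] C_def[symmetric] by simp
qed

theorem lemma12:
  fixes w :: "nat \<Rightarrow> 'a" and n k :: nat
  assumes "n \<ge> 2"
    and "\<And>a. card {i\<in>{1..n}. w i = a} \<le> k"
  shows "f_max n w \<le> max (4 * k) n + 2"
proof -
  have b: "\<And>G. f_grid n w G \<le> max (4 * k) n + 2" using grid_bound[OF assms(2)] by blast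
  have "range (f_grid n w) \<subseteq> {..max (4 * k) n + 2}" using b by auto
  then have "finite (range (f_grid n w))" using finite_subset by blast
  then show ?thesis unfolding f_max_def using b by (subst Max_le_iff) auto
qed

end
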